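(* Let $(W,S)$ be a Coxeter system of finite rank with just one bad 5-edge $\{x,y\}$. Let $B_1,\dots,B_n$ ($n\ge0$) be the distinct bad separators of $S$, let $F_i$ be the set of good foci of $B_i$, and put $S_i=B_i\cup F_i$. Then there is a unique subset $S_0\subseteq S$ such that $S_0,S_1,\dots,S_n$ form a reduced visual star decomposition of $(W,S)$ with center $S_0$, namely: $S=S_0\cup S_1\cup\dots\cup S_n$; $S_0\cap S_i=B_i$ is a proper subset of both $S_0$ and $S_i$ for each $i\ge1$; $S_i\cap S_j\subseteq S_0$ for distinct $i,j\ge1$; and any $s,t\in S$ with $m(s,t)<\infty$ lie in a common $S_i$ (so $W$ is the fundamental group of the star of groups with center vertex group $\langle S_0\rangle$, leaf vertex groups $\langle S_i\rangle$ and edge groups $\langle B_i\rangle$); and moreover $\{x,y\}\subseteq S_0$ and $S_0$ has no bad separators (with respect to the Coxeter system $(\langle S_0\rangle,S_0)$ and the bad edge $\{x,y\}$). Equivalently, $(W,S)$ has a unique reduced visual graph of groups decomposition whose graph is a star, whose center vertex system $(\langle S_0\rangle,S_0)$ satisfies $\{x,y\}\subseteq S_0$ and has no bad separators, whose edge systems are $(\langle B_i\rangle,B_i)$ for the bad separators $B_1,\dots,B_n$, and whose other vertex systems $(\langle S_i\rangle,S_i)$ satisfy $B_i=S_0\cap S_i$ and $S_i-B_i=F_i$.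
   Context: Coxeter system $(W,S)$: $W=\langle S\mid (st)^{m(s,t)}\ (m(s,t)<\infty)\rangle$, $m(s,s)=1$, $m(s,t)=m(t,s)\in\{2,\dots,\infty\}$; $\langle A\rangle$ the visual subgroup generated by $A\subseteq S$. $\Gamma(W,S)$: labeled graph on $S$ with edge $\{s,t\}$ iff $s\neq t$, $m(s,t)<\infty$. A simplex is $A\subseteq S$ with all $m(s,t)<\infty$; $A$ is irreducible if the graph on $A$ with edges $m(s,t)\ge3$ is connected; maximal irreducible simplex: not properly contained in another irreducible simplex. $A^\perp=\{s\in S: m(s,a)=2\ \forall a\in A\}$. Types ${\bf G}_3,{\bf G}_4$: Coxeter diagram a path with labels $3,5$ resp. $3,3,5$. A set of bad edges is a set $\mathcal B_2$ of pairs $\{a,b\}\subseteq S$ with $5\le m(a,b)<\infty$ such that every irreducible simplex properly containing $\{a,b\}$ has type ${\bf G}_3$ or ${\bf G}_4$; "just one bad 5-edge $\{x,y\}$" means $\mathcal B_2=\{\{x,y\}\}$ and $m(x,y)=5$. An irreducible simplex is bad if it contains a bad edge. Separation $(S_1,S_0,S_2)$: $S=S_1\cup S_2$, $S_0=S_1\cap S_2$, $S_i-S_0\ne\emptyset$, $m(s,t)=\infty$ for $s\in S_1-S_0$, $t\in S_2-S_0$. $B$ is a $(c,f)$-separator if there is a separation $(S_1,B,S_2)$ with $c\in S_1-B$, $f\in S_2-B$ (equivalently $c,f$ lie in different components of $\Gamma(W,S)-B$); minimal if no proper subset is one. A bad separator of $S$ is a subset $B\subseteq S$ for which there are $a,b\in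 B$ with $m(a,b)=2$ (eyes) and $c\in S-B$ such that $A=\{a,b,c\}$ is a bad maximal irreducible simplex, $B\subseteq\{a,b\}\cup A^\perp$, and there exists $f\in S-B$ such that $B$ is a minimal $(c,f)$-separator of $S$; every such $f$ is a good focus of $B$. *)

theory Defs
  imports Main "HOL-Library.Extended_Nat"
begin

text \<open>A Coxeter system of finite rank is encoded by its finite generating set S and its
Coxeter matrix m, with values in enat (\<infinity> meaning no relation).\<close>

definition coxeter_matrix :: "'a set \<Rightarrow> ('a \<Rightarrow> 'a \<Rightarrow> enat) \<Rightarrow> bool" where
  "coxeter_matrix S m \<longleftrightarrow>
     (\<forall>s\<in>S. m s s = 1) \<and>
     (\<forall>s\<in>S. \<forall>t\<in>S. m s t = m t s) \<and>
     (\<forall>s\<in>S. \<forall>t\<in>S. s \<noteq> t \<longrightarrow> m s t \<ge> 2)"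

definition simplex :: "'a set \<Rightarrow> ('a \<Rightarrow> 'a \<Rightarrow> enat) \<Rightarrow> 'a set \<Rightarrow> bool" where
  "simplex S m A \<longleftrightarrow> A \<subseteq> S \<and> (\<forall>s\<in>A. \<forall>t\<in>A. m s t < \<infinity>)"

definition irreducible :: "('a \<Rightarrow> 'a \<Rightarrow> enat) \<Rightarrow> 'a set \<Rightarrow> bool" where
  "irreducible m A \<longleftrightarrow> A \<noteq> {} \<and>
     (\<forall>a\<in>A. \<forall>b\<in>A. (a, b) \<in> {(s, t). s \<in> A \<and> t \<in> A \<and> m s t \<ge> 3}\<^sup>*)"

definition irred_simplex :: "'a set \<Rightarrow> ('a \<Rightarrow> 'a \<Rightarrow> enat) \<Rightarrow> 'a set \<Rightarrow> bool" where
  "irred_simplex S m A \<longleftrightarrow> simplex S m A \<and> irreducible m A"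

definition max_irred_simplex :: "'a set \<Rightarrow> ('a \<Rightarrow> 'a \<Rightarrow> enat) \<Rightarrow> 'a set \<Rightarrow> bool" where
  "max_irred_simplex S m A \<longleftrightarrow> irred_simplex S m A \<and>
     \<not> (\<exists>A'. A \<subset> A' \<and> irred_simplex S m A')"

definition type_G3 :: "('a \<Rightarrow> 'a \<Rightarrow> enat) \<Rightarrow> 'a set \<Rightarrow> bool" where
  "type_G3 m A \<longleftrightarrow> (\<exists>a b c. distinct [a, b, c] \<and> A = {a, b, c} \<and>
      m a b = 3 \<and> m b c = 5 \<and> m a c = 2)"

definition type_G4 :: "('a \<Rightarrow> 'a \<Rightarrow> enat) \<Rightarrow> 'a set \<Rightarrow> bool" where
  "type_G4 m A \<longleftrightarrow> (\<exists>a b c d. distinct [a, b, c, d] \<and> A = {a, b, c, d} \<and>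
      m a b = 3 \<and> m b c = 3 \<and> m c d = 5 \<and>
      m a c = 2 \<and> m a d = 2 \<and> m b d = 2)"

definition bad_edge :: "'a set \<Rightarrow> ('a \<Rightarrow> 'a \<Rightarrow> enat) \<Rightarrow> 'a \<Rightarrow> 'a \<Rightarrow> bool" where
  "bad_edge S m x y \<longleftrightarrow> x \<in> S \<and> y \<in> S \<and> x \<noteq> y \<and> 5 \<le> m x y \<and> m x y < \<infinity> \<and>
     (\<forall>A. irred_simplex S m A \<and> {x, y} \<subset> A \<longrightarrow> type_G3 m A \<or> type_G4 m A)"

definition perp :: "'a set \<Rightarrow> ('a \<Rightarrow> 'a \<Rightarrow> enat) \<Rightarrow> 'a set \<Rightarrow> 'a set" where
  "perp S m A = {s \<in> S. \<forall>a\<in>A. m s a = 2}"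

definition separator :: "'a set \<Rightarrow> ('a \<Rightarrow> 'a \<Rightarrow> enat) \<Rightarrow> 'a set \<Rightarrow> 'a \<Rightarrow> 'a \<Rightarrow> bool" where
  "separator S m B c f \<longleftrightarrow> (\<exists>S1 S2. S = S1 \<union> S2 \<and> B = S1 \<inter> S2 \<and>
      S1 - B \<noteq> {} \<and> S2 - B \<noteq> {} \<and>
      (\<forall>s\<in>S1 - B. \<forall>t\<in>S2 - B. m s t = \<infinity>) \<and>
      c \<in> S1 - B \<and> f \<in> S2 - B)"

definition min_separator :: "'a set \<Rightarrow> ('a \<Rightarrow> 'a \<Rightarrow> enat) \<Rightarrow> 'a set \<Rightarrow> 'a \<Rightarrow> 'a \<Rightarrow> bool" where
  "min_separator S m B c f \<longleftrightarrow> separator S m B c f \<and>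
      \<not> (\<exists>B'. B' \<subset> B \<and> separator S m B' c f)"

definition bad_sep_witness :: "'a set \<Rightarrow> ('a \<Rightarrow> 'a \<Rightarrow> enat) \<Rightarrow> 'a \<Rightarrow> 'a \<Rightarrow> 'a set \<Rightarrow>
    'a \<Rightarrow> 'a \<Rightarrow> 'a \<Rightarrow> bool" where
  "bad_sep_witness S m x y B a b c \<longleftrightarrow> B \<subseteq> S \<and> a \<in> B \<and> b \<in> B \<and> m a b = 2 \<and>
      c \<in> S - B \<and> max_irred_simplex S m {a, b, c} \<and> {x, y} \<subseteq> {a, b, c} \<and>
      B \<subseteq> {a, b} \<union> perp S m {a, b, c}"

definition good_focus :: "'a set \<Rightarrow> ('a \<Rightarrow> 'a \<Rightarrow> enat) \<Rightarrow> 'a \<Rightarrow> 'a \<Rightarrow> 'a set \<Rightarrow> 'a \<Rightarrow> bool" where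
  "good_focus S m x y B f \<longleftrightarrow> (\<exists>a b c. bad_sep_witness S m x y B a b c \<and>
      f \<in> S - B \<and> min_separator S m B c f)"

definition bad_separators :: "'a set \<Rightarrow> ('a \<Rightarrow> 'a \<Rightarrow> enat) \<Rightarrow> 'a \<Rightarrow> 'a \<Rightarrow> 'a set set" where
  "bad_separators S m x y = {B. B \<subseteq> S \<and> (\<exists>f. good_focus S m x y B f)}"

definition good_foci :: "'a set \<Rightarrow> ('a \<Rightarrow> 'a \<Rightarrow> enat) \<Rightarrow> 'a \<Rightarrow> 'a \<Rightarrow> 'a set \<Rightarrow> 'a set" where
  "good_foci S m x y B = {f. good_focus S m x y B f}"

definition reduced_visual_star_decomp ::
  "'a set \<Rightarrow> ('a \<Rightarrow> 'a \<Rightarrow> enat) \<Rightarrow> 'a set set \<Rightarrow> ('a set \<Rightarrow> 'a set) \<Rightarrow> 'a set \<Rightarrow> bool" where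
  "reduced_visual_star_decomp S m \<B> SL S0 \<longleftrightarrow>
     S = S0 \<union> (\<Union>B\<in>\<B>. SL B) \<and>
     (\<forall>B\<in>\<B>. S0 \<inter> SL B = B \<and> B \<subset> S0 \<and> B \<subset> SL B) \<and>
     (\<forall>B\<in>\<B>. \<forall>B'\<in>\<B>. B \<noteq> B' \<longrightarrow> SL B \<inter> SL B' \<subseteq> S0) \<and>
     (\<forall>s\<in>S. \<forall>t\<in>S. m s t < \<infinity> \<longrightarrow>
        ({s, t} \<subseteq> S0 \<or> (\<exists>B\<in>\<B>. {s, t} \<subseteq> SL B)))"

end

theory Submission
  imports Defs
begin


declare not_infinity_eq[iff del]

definition adjR :: "('a \<Rightarrow> 'a \<Rightarrow> enat) \<Rightarrow> 'a set \<Rightarrow> ('a \<times> 'a) set" where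
  "adjR m T = {(s, t). s \<in> T \<and> t \<in> T \<and> m s t < \<infinity>}"

lemma lt_inf: "((x::enat) < \<infinity>) = (x \<noteq> \<infinity>)"
  by (cases x) auto

lemma adjI: "s \<in> T \<Longrightarrow> t \<in> T \<Longrightarrow> m s t < \<infinity> \<Longrightarrow> (s, t) \<in> adjR m T"
  by (simp add: adjR_def)

lemma adjD: "(s, t) \<in> adjR m T \<Longrightarrow> s \<in> T \<and> t \<in> T \<and> m s t < \<infinity>"
  by (simp add: adjR_def)

lemma reach_step: "(u, s) \<in> (adjR m T)\<^sup>* \<Longrightarrow> s \<in> T \<Longrightarrow> t \<in> T \<Longrightarrow> m s t < \<infinity>
  \<Longrightarrow> (u, t) \<in> (adjR m T)\<^sup>*"
  by (meson adjI rtrancl.rtrancl_into_rtrancl)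

lemma reach_in:
  assumes "(u, v) \<in> (adjR m T)\<^sup>*" "u \<in> T" shows "v \<in> T"
  using assms by (induction rule: rtrancl_induct) (auto simp: adjR_def)

lemma reach_mono:
  assumes "(u, v) \<in> (adjR m T)\<^sup>*" "T \<subseteq> T'" shows "(u, v) \<in> (adjR m T')\<^sup>*"
proof -
  have "adjR m T \<subseteq> adjR m T'" using assms(2) by (auto simp: adjR_def)
  then show ?thesis using assms(1) rtrancl_mono by blast
qed

lemma cm_sym: "coxeter_matrix S m \<Longrightarrow> s \<in> S \<Longrightarrow> t \<in> S \<Longrightarrow> m s t = m t s"
  by (simp add: coxeter_matrix_def)

lemma reach_sym:
  assumes "coxeter_matrix S m" "T \<subseteq> S" "(u, v) \<in> (adjR m T)\<^sup>*"
  shows "(v, u) \<in> (adjR m T)\<^sup>*"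
proof -
  have "sym (adjR m T)" unfolding sym_def
  proof (intro allI impI)
    fix s t assume "(s, t) \<in> adjR m T"
    then have "s \<in> T" "t \<in> T" "m s t < \<infinity>" by (auto simp: adjR_def)
    moreover have "m s t = m t s" using cm_sym[OF assms(1)] assms(2) calculation(1,2) by blast
    ultimately show "(t, s) \<in> adjR m T" by (simp add: adjR_def)
  qed
  then have "sym ((adjR m T)\<^sup>*)" by (rule sym_rtrancl)
  then show ?thesis using assms(3) by (auto simp: sym_def)
qed

lemma sep_iff:
  "separator S m B c f \<longleftrightarrow> B \<subseteq> S \<and> c \<in> S - B \<and> f \<in> S - B \<and> (c, f) \<notin> (adjR m (S - B))\<^sup>*"
proof
  assume "separator S m B c f"
  then obtain S1 S2 where S: "S = S1 \<union> S2" "B = S1 \<inter> S2" "\<forall>s\<in>S1 - B. \<forall>t\<in>S2 - B. m s t = \<infinity>"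
    "c \<in> S1 - B" "f \<in> S2 - B" unfolding separator_def by blast
  have "t \<in> S1 - B" if "(c, t) \<in> (adjR m (S - B))\<^sup>*" for t
    using that
  proof (induction rule: rtrancl_induct)
    case base then show ?case using S by simp
  next
    case (step t t')
    then have "t' \<in> S - B" "m t t' < \<infinity>" by (auto simp: adjR_def)
    then show ?case using step S by auto
  qed
  then show "B \<subseteq> S \<and> c \<in> S - B \<and> f \<in> S - B \<and> (c, f) \<notin> (adjR m (S - B))\<^sup>*"
    using S by blast
next
  assume H: "B \<subseteq> S \<and> c \<in> S - B \<and> f \<in> S - B \<and> (c, f) \<notin> (adjR m (S - B))\<^sup>*"
  define R where "R = {t. (c, t) \<in> (adjR m (S - B))\<^sup>*}"
  have RS: "R \<subseteq> S - B" using H reach_in unfolding R_def by fastforce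
  have cR: "c \<in> R" unfolding R_def by simp
  have fR: "f \<notin> R" using H unfolding R_def by simp
  have inf: "m s t = \<infinity>" if "s \<in> R" "t \<in> S - R - B" for s t
  proof (rule ccontr)
    assume "m s t \<noteq> \<infinity>"
    then have "m s t < \<infinity>" by (simp add: lt_inf)
    then have "(c, t) \<in> (adjR m (S - B))\<^sup>*" using that RS reach_step[of c s m "S - B" t]
      unfolding R_def by blast
    then have "t \<in> R" unfolding R_def by simp
    then show False using that by simp
  qed
  have e1: "S = (B \<union> R) \<union> (S - R)" using H RS by blast
  have e2: "B = (B \<union> R) \<inter> (S - R)" using H RS by blast
  have e3: "(B \<union> R) - B = R" using RS by blast
  have e4: "f \<in> (S - R) - B" using H fR by blast
  show "separator S m B c f" unfolding separator_def
    apply (rule exI[of _ "B \<union> R"], rule exI[of _ "S - R"])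
    apply (simp only: e3 flip: e1 e2)
    using cR e4 inf by blast
qed


lemma wit_basic:
  assumes "bad_sep_witness S m x y B a b c"
  shows "B \<subseteq> S" "a \<in> B" "b \<in> B" "m a b = 2" "c \<in> S" "c \<notin> B"
    "simplex S m {a, b, c}" "{x, y} \<subseteq> {a, b, c}" "B \<subseteq> {a, b} \<union> perp S m {a, b, c}"
    "max_irred_simplex S m {a, b, c}"
  using assms unfolding bad_sep_witness_def max_irred_simplex_def irred_simplex_def by auto

lemma wit_c:
  assumes cm: "coxeter_matrix S m" and w: "bad_sep_witness S m x y B a b c" and m5: "m x y = 5"
  shows "c \<in> {x, y}"
proof (rule ccontr)
  assume nc: "c \<notin> {x, y}"
  note W = wit_basic[OF w]
  have aS: "a \<in> S" and bS: "b \<in> S" using W by auto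
  have xy: "x \<in> {a, b}" "y \<in> {a, b}" using W(8) nc by auto
  have "m x y = 2 \<or> m x y = 1"
  proof (cases "x = y")
    case True then have "x \<in> S" using xy aS bS by auto
    then show ?thesis using True cm by (simp add: coxeter_matrix_def)
  next
    case False
    then have "(x = a \<and> y = b) \<or> (x = b \<and> y = a)" using xy by auto
    then show ?thesis using W(4) cm_sym[OF cm aS bS] by auto
  qed
  then show False using m5 by simp
qed

lemma wit_adj:
  assumes cm: "coxeter_matrix S m" and w: "bad_sep_witness S m x y B a b c"
    and t: "t \<in> B" and z: "z \<in> {x, y}"
  shows "m t z < \<infinity>"
proof -
  note W = wit_basic[OF w]
  have zA: "z \<in> {a, b, c}" using W(8) z by auto
  have "t \<in> {a, b} \<or> t \<in> perp S m {a, b, c}" using W(9) t by auto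
  then show ?thesis
  proof
    assume "t \<in> {a, b}"
    then show ?thesis using W(7) zA unfolding simplex_def by auto
  next
    assume "t \<in> perp S m {a, b, c}"
    then have "m t z = 2" using zA unfolding perp_def by auto
    then show ?thesis by simp
  qed
qed

lemma focus_data:
  assumes "good_focus S m x y B f"
  obtains a b c where "bad_sep_witness S m x y B a b c" "min_separator S m B c f"
    "B \<subseteq> S" "c \<in> S - B" "f \<in> S - B" "(c, f) \<notin> (adjR m (S - B))\<^sup>*"
  using assms unfolding good_focus_def min_separator_def sep_iff by blast

lemma focus_not_in:
  assumes cm: "coxeter_matrix S m" and m5: "m x y = 5"
    and F: "good_focus S m x y B f" and w': "bad_sep_witness S m x y B' a' b' c'"
  shows "f \<notin> B'"
proof
  assume fB': "f \<in> B'"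
  obtain a b c where w: "bad_sep_witness S m x y B a b c" and H: "B \<subseteq> S" "c \<in> S - B" "f \<in> S - B"
    "(c, f) \<notin> (adjR m (S - B))\<^sup>*" using focus_data[OF F] by metis
  have cxy: "c \<in> {x, y}" using wit_c[OF cm w m5] .
  have "m f c < \<infinity>" using wit_adj[OF cm w' fB' cxy] .
  then have "m c f < \<infinity>" using cm_sym[OF cm, of c f] H by auto
  then have "(c, f) \<in> (adjR m (S - B))\<^sup>*" using H by (meson adjI r_into_rtrancl)
  then show False using H by blast
qed

lemma focus_not_xy:
  assumes F: "good_focus S m x y B f"
  shows "f \<noteq> x" "f \<noteq> y"
proof -
  obtain a b c where w: "bad_sep_witness S m x y B a b c" and H: "B \<subseteq> S" "c \<in> S - B" "f \<in> S - B"
    "(c, f) \<notin> (adjR m (S - B))\<^sup>*" using focus_data[OF F] by metis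
  note W = wit_basic[OF w]
  have "f \<noteq> c" using H(4) by auto
  moreover have "f \<notin> {a, b}" using W(2,3) H(3) by auto
  ultimately have "f \<notin> {a, b, c}" by auto
  then show "f \<noteq> x" "f \<noteq> y" using W(8) by auto
qed

lemma focus_closed:
  assumes cm: "coxeter_matrix S m" and F: "good_focus S m x y B f"
    and t: "t \<in> S" "t \<notin> B" "m f t < \<infinity>"
  shows "good_focus S m x y B t"
proof -
  obtain a b c where w: "bad_sep_witness S m x y B a b c" and ms: "min_separator S m B c f"
    and H: "B \<subseteq> S" "c \<in> S - B" "f \<in> S - B"
    "(c, f) \<notin> (adjR m (S - B))\<^sup>*" using focus_data[OF F] by metis
  have mtf: "m t f < \<infinity>" using cm_sym[OF cm, of t f] t H by auto
  have s1: "separator S m B c t" unfolding sep_iff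
  proof (intro conjI)
    show "(c, t) \<notin> (adjR m (S - B))\<^sup>*"
    proof
      assume "(c, t) \<in> (adjR m (S - B))\<^sup>*"
      then have "(c, f) \<in> (adjR m (S - B))\<^sup>*" using reach_step[of c t m "S - B" f] t H mtf by blast
      then show False using H by blast
    qed
  qed (use H t in auto)
  have s2: "\<not> (\<exists>B'. B' \<subset> B \<and> separator S m B' c t)"
  proof
    assume "\<exists>B'. B' \<subset> B \<and> separator S m B' c t"
    then obtain B' where B': "B' \<subset> B" "separator S m B' c t" by blast
    then have H': "B' \<subseteq> S" "c \<in> S - B'" "t \<in> S - B'" "(c, t) \<notin> (adjR m (S - B'))\<^sup>*"
      unfolding sep_iff by auto
    have "(c, f) \<notin> (adjR m (S - B'))\<^sup>*"
    proof
      assume "(c, f) \<in> (adjR m (S - B'))\<^sup>*"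
      moreover have "f \<in> S - B'" using H B' by auto
      ultimately have "(c, t) \<in> (adjR m (S - B'))\<^sup>*" using reach_step[of c f m "S - B'" t] H' t by blast
      then show False using H' by blast
    qed
    then have "separator S m B' c f" unfolding sep_iff using H' H B' by auto
    then show False using ms B' unfolding min_separator_def by blast
  qed
  show ?thesis unfolding good_focus_def min_separator_def
    using w s1 s2 t by blast
qed

lemma minsep_nbr:
  assumes cm: "coxeter_matrix S m" and ms: "min_separator S m B c f" and b: "b \<in> B"
  shows "\<exists>t. (f, t) \<in> (adjR m (S - B))\<^sup>* \<and> m b t < \<infinity>"
proof (rule ccontr)
  assume N: "\<not> (\<exists>t. (f, t) \<in> (adjR m (S - B))\<^sup>* \<and> m b t < \<infinity>)"
  have H: "B \<subseteq> S" "c \<in> S - B" "f \<in> S - B" "(c, f) \<notin> (adjR m (S - B))\<^sup>*"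
    using ms unfolding min_separator_def sep_iff by auto
  have R: "(f, t) \<in> (adjR m (S - B))\<^sup>*" if "(f, t) \<in> (adjR m (S - (B - {b})))\<^sup>*" for t
    using that
  proof (induction rule: rtrancl_induct)
    case base then show ?case by simp
  next
    case (step t t')
    have tS: "t \<in> S - B" using reach_in[OF step.IH] H by auto
    have A: "t' \<in> S - (B - {b})" "m t t' < \<infinity>" using adjD[OF step.hyps(2)] by auto
    show ?case
    proof (cases "t' = b")
      case True
      then have "m b t < \<infinity>" using A cm_sym[OF cm, of b t] tS by auto
      then show ?thesis using N step.IH by blast
    next
      case False
      then have "t' \<in> S - B" using A by auto
      then show ?thesis using reach_step[OF step.IH] tS A by blast
    qed
  qed
  have "(c, f) \<notin> (adjR m (S - (B - {b})))\<^sup>*"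
  proof
    assume "(c, f) \<in> (adjR m (S - (B - {b})))\<^sup>*"
    then have "(f, c) \<in> (adjR m (S - (B - {b})))\<^sup>*" using reach_sym[OF cm] by blast
    then have "(f, c) \<in> (adjR m (S - B))\<^sup>*" using R by blast
    then have "(c, f) \<in> (adjR m (S - B))\<^sup>*" using reach_sym[OF cm] by blast
    then show False using H by blast
  qed
  then have "separator S m (B - {b}) c f" unfolding sep_iff using H by auto
  moreover have "B - {b} \<subset> B" using b by auto
  ultimately show False using ms unfolding min_separator_def by blast
qed

lemma comp_transfer:
  assumes cm: "coxeter_matrix S m" and m5: "m x y = 5"
    and F: "good_focus S m x y B f" and F': "good_focus S m x y B' f"
    and r: "(f, t) \<in> (adjR m (S - B))\<^sup>*"
  shows "(f, t) \<in> (adjR m (S - B'))\<^sup>*"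
proof -
  obtain a b c where w: "bad_sep_witness S m x y B a b c"
    and H: "B \<subseteq> S" "c \<in> S - B" "f \<in> S - B"
    "(c, f) \<notin> (adjR m (S - B))\<^sup>*" using focus_data[OF F] by metis
  obtain a' b' c' where w': "bad_sep_witness S m x y B' a' b' c'"
    using focus_data[OF F'] by metis
  have cxy: "c \<in> {x, y}" using wit_c[OF cm w m5] .
  have C: "s \<notin> B'" if "(f, s) \<in> (adjR m (S - B))\<^sup>*" for s
  proof
    assume sB': "s \<in> B'"
    have sS: "s \<in> S - B" using reach_in[OF that] H by auto
    have "m s c < \<infinity>" using wit_adj[OF cm w' sB' cxy] .
    then have "(f, c) \<in> (adjR m (S - B))\<^sup>*" using reach_step[OF that] sS H by blast
    then have "(c, f) \<in> (adjR m (S - B))\<^sup>*" using reach_sym[OF cm] by blast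
    then show False using H by blast
  qed
  show ?thesis using r
  proof (induction rule: rtrancl_induct)
    case base then show ?case by simp
  next
    case (step t t')
    have A: "t \<in> S - B" "t' \<in> S - B" "m t t' < \<infinity>" using adjD[OF step.hyps(2)] by auto
    have "t \<notin> B'" using C step.hyps(1) by blast
    moreover have "t' \<notin> B'" using C step.hyps(1,2) by (meson rtrancl.rtrancl_into_rtrancl)
    ultimately show ?case using reach_step[OF step.IH] A by blast
  qed
qed

lemma focus_sub:
  assumes cm: "coxeter_matrix S m" and m5: "m x y = 5"
    and F: "good_focus S m x y B f" and F': "good_focus S m x y B' f"
  shows "B \<subseteq> B'"
proof
  fix b0 assume b0: "b0 \<in> B"
  obtain a b c where w: "bad_sep_witness S m x y B a b c" and ms: "min_separator S m B c f"
    and H: "B \<subseteq> S" "c \<in> S - B" "f \<in> S - B"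
    "(c, f) \<notin> (adjR m (S - B))\<^sup>*" using focus_data[OF F] by metis
  have H': "B' \<subseteq> S" "f \<in> S - B'" using focus_data[OF F'] by metis+
  obtain t where t: "(f, t) \<in> (adjR m (S - B))\<^sup>*" "m b0 t < \<infinity>" using minsep_nbr[OF cm ms b0] by blast
  show "b0 \<in> B'"
  proof (rule ccontr)
    assume nb: "b0 \<notin> B'"
    have t': "(f, t) \<in> (adjR m (S - B'))\<^sup>*" using comp_transfer[OF cm m5 F F' t(1)] .
    have tS: "t \<in> S - B'" using reach_in[OF t'] H' by auto
    have "m t b0 < \<infinity>" using t(2) cm_sym[OF cm, of t b0] tS H b0 by auto
    then have "(f, b0) \<in> (adjR m (S - B'))\<^sup>*" using reach_step[OF t'] tS H b0 nb by blast
    then have "(f, b0) \<in> (adjR m (S - B))\<^sup>*" using comp_transfer[OF cm m5 F' F] by blast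
    then have "b0 \<in> S - B" using reach_in H by metis
    then show False using b0 by blast
  qed
qed

lemma focus_unique:
  assumes cm: "coxeter_matrix S m" and m5: "m x y = 5"
    and F: "good_focus S m x y B f" and F': "good_focus S m x y B' f"
  shows "B = B'"
  using focus_sub[OF cm m5 F F'] focus_sub[OF cm m5 F' F] by blast


theorem theorem5p10:
  fixes S :: "'a set" and m :: "'a \<Rightarrow> 'a \<Rightarrow> enat" and x y :: 'a
  assumes "finite S"
    and "coxeter_matrix S m"
    and "bad_edge S m x y"
    and "m x y = 5"
  shows "\<exists>!S0. S0 \<subseteq> S \<and>
    reduced_visual_star_decomp S m (bad_separators S m x y)
      (\<lambda>B. B \<union> good_foci S m x y B) S0 \<and>
    {x, y} \<subseteq> S0 \<and> bad_separators S0 m x y = {}"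
proof -
  note cm = assms(2)
  note m5 = assms(4)
  have xS: "x \<in> S" "y \<in> S" using assms(3) by (auto simp: bad_edge_def)
  define Foc where "Foc = {f. \<exists>B. good_focus S m x y B f}"
  define S0 where "S0 = S - Foc"
  let ?BS = "bad_separators S m x y"
  let ?SL = "\<lambda>B. B \<union> good_foci S m x y B"
  have S0S: "S0 \<subseteq> S" unfolding S0_def by blast
  have BSw: "\<exists>a b c. bad_sep_witness S m x y B a b c" if BB: "B \<in> ?BS" for B
  proof -
    obtain f where "good_focus S m x y B f" using BB unfolding bad_separators_def by blast
    then show ?thesis unfolding good_focus_def by blast
  qed
  have BS_S: "B \<subseteq> S" if "B \<in> ?BS" for B
    using that unfolding bad_separators_def by blast
  have FocS: "f \<in> S - B" if "good_focus S m x y B f" for B f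
    using that unfolding good_focus_def by blast
  have FocBS: "B \<in> ?BS" if FF: "good_focus S m x y B f" for B f
  proof -
    obtain a b c where "bad_sep_witness S m x y B a b c" using FF unfolding good_focus_def by blast
    then have "B \<subseteq> S" by (rule wit_basic(1))
    then show ?thesis unfolding bad_separators_def using FF by blast
  qed
  have BS_sub_S0: "B \<subseteq> S0" if BB: "B \<in> ?BS" for B
  proof
    fix b assume b: "b \<in> B"
    obtain a0 b0 c0 where w: "bad_sep_witness S m x y B a0 b0 c0" using BSw[OF BB] by blast
    have "b \<in> S" using wit_basic(1)[OF w] b by auto
    moreover have "b \<notin> Foc" using focus_not_in[OF cm m5 _ w] b unfolding Foc_def by blast
    ultimately show "b \<in> S0" unfolding S0_def by blast
  qed
  have xyS0: "{x, y} \<subseteq> S0"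
  proof -
    have "x \<notin> Foc"
    proof
      assume "x \<in> Foc"
      then obtain B where "good_focus S m x y B x" unfolding Foc_def by blast
      from focus_not_xy(1)[OF this] show False by simp
    qed
    moreover have "y \<notin> Foc"
    proof
      assume "y \<in> Foc"
      then obtain B where "good_focus S m x y B y" unfolding Foc_def by blast
      from focus_not_xy(2)[OF this] show False by simp
    qed
    ultimately show ?thesis using xS unfolding S0_def by blast
  qed
  have decomp: "reduced_visual_star_decomp S m ?BS ?SL S0"
    unfolding reduced_visual_star_decomp_def
  proof (intro conjI)
    show "S = S0 \<union> (\<Union>B\<in>?BS. ?SL B)"
    proof
      show "S \<subseteq> S0 \<union> (\<Union>B\<in>?BS. ?SL B)"
      proof
        fix s assume s: "s \<in> S"
        show "s \<in> S0 \<union> (\<Union>B\<in>?BS. ?SL B)"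
        proof (cases "s \<in> Foc")
          case True
          then obtain B where F: "good_focus S m x y B s" unfolding Foc_def by blast
          then have "s \<in> ?SL B" unfolding good_foci_def by blast
          then show ?thesis using FocBS[OF F] by blast
        next
          case False then show ?thesis using s unfolding S0_def by blast
        qed
      qed
    next
      show "S0 \<union> (\<Union>B\<in>?BS. ?SL B) \<subseteq> S"
        using S0S BS_S FocS unfolding good_foci_def by blast
    qed
  next
    show "\<forall>B\<in>?BS. S0 \<inter> ?SL B = B \<and> B \<subset> S0 \<and> B \<subset> ?SL B"
    proof
      fix B assume B: "B \<in> ?BS"
      obtain f0 where f0: "good_focus S m x y B f0" using B unfolding bad_separators_def by blast
      obtain a0 b0 c0 where w: "bad_sep_witness S m x y B a0 b0 c0" and H: "c0 \<in> S - B" "f0 \<in> S - B"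
        using focus_data[OF f0] by metis
      have e: "S0 \<inter> ?SL B = B"
      proof
        show "S0 \<inter> ?SL B \<subseteq> B"
        proof
          fix s assume s: "s \<in> S0 \<inter> ?SL B"
          then have "s \<notin> Foc" unfolding S0_def by blast
          then have "\<not> good_focus S m x y B s" unfolding Foc_def by blast
          then show "s \<in> B" using s unfolding good_foci_def by blast
        qed
        show "B \<subseteq> S0 \<inter> ?SL B" using BS_sub_S0[OF B] by blast
      qed
      have "c0 \<in> {x, y}" using wit_c[OF cm w m5] .
      then have "c0 \<in> S0 - B" using xyS0 H by blast
      then have p1: "B \<subset> S0" using BS_sub_S0[OF B] by blast
      have "f0 \<in> ?SL B - B" using f0 H unfolding good_foci_def by blast
      then have p2: "B \<subset> ?SL B" by blast
      show "S0 \<inter> ?SL B = B \<and> B \<subset> S0 \<and> B \<subset> ?SL B" by (rule conjI[OF e conjI[OF p1 p2]])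
    qed
  next
    show "\<forall>B\<in>?BS. \<forall>B'\<in>?BS. B \<noteq> B' \<longrightarrow> ?SL B \<inter> ?SL B' \<subseteq> S0"
    proof (intro ballI impI subsetI)
      fix B B' s assume B: "B \<in> ?BS" and B': "B' \<in> ?BS" and ne: "B \<noteq> B'"
        and s: "s \<in> ?SL B \<inter> ?SL B'"
      show "s \<in> S0"
      proof (rule ccontr)
        assume ns: "s \<notin> S0"
        have sS: "s \<in> S" using s BS_S[OF B] FocS unfolding good_foci_def by blast
        then obtain B2 where F2: "good_focus S m x y B2 s" using ns unfolding S0_def Foc_def by blast
        obtain a0 b0 c0 where w: "bad_sep_witness S m x y B a0 b0 c0" using BSw[OF B] by blast
        obtain a1 b1 c1 where w': "bad_sep_witness S m x y B' a1 b1 c1" using BSw[OF B'] by blast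
        have "s \<notin> B" using focus_not_in[OF cm m5 F2 w] .
        then have "good_focus S m x y B s" using s unfolding good_foci_def by blast
        then have e1: "B2 = B" by (rule focus_unique[OF cm m5 F2])
        have "s \<notin> B'" using focus_not_in[OF cm m5 F2 w'] .
        then have "good_focus S m x y B' s" using s unfolding good_foci_def by blast
        then have e2: "B2 = B'" by (rule focus_unique[OF cm m5 F2])
        show False using e1 e2 ne by simp
      qed
    qed
  next
    show "\<forall>s\<in>S. \<forall>t\<in>S. m s t < \<infinity> \<longrightarrow> {s, t} \<subseteq> S0 \<or> (\<exists>B\<in>?BS. {s, t} \<subseteq> ?SL B)"
    proof (intro ballI impI)
      fix s t assume s: "s \<in> S" and t: "t \<in> S" and mst: "m s t < \<infinity>"
      have mts: "m t s < \<infinity>" using mst cm_sym[OF cm s t] by simp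
      show "{s, t} \<subseteq> S0 \<or> (\<exists>B\<in>?BS. {s, t} \<subseteq> ?SL B)"
      proof (cases "s \<in> Foc")
        case True
        then obtain B where F: "good_focus S m x y B s" unfolding Foc_def by blast
        have "t \<in> B \<or> good_focus S m x y B t" using focus_closed[OF cm F t _ mst] by blast
        then have "{s, t} \<subseteq> ?SL B" using F unfolding good_foci_def by blast
        then show ?thesis using FocBS[OF F] by blast
      next
        case sF: False
        show ?thesis
        proof (cases "t \<in> Foc")
          case True
          then obtain B where F: "good_focus S m x y B t" unfolding Foc_def by blast
          have "s \<in> B \<or> good_focus S m x y B s" using focus_closed[OF cm F s _ mts] by blast
          then have "{s, t} \<subseteq> ?SL B" using F unfolding good_foci_def by blast
          then show ?thesis using FocBS[OF F] by blast
        next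
          case False
          then show ?thesis using sF s t unfolding S0_def by blast
        qed
      qed
    qed
  qed
  have noBS: "bad_separators S0 m x y = {}"
  proof (rule ccontr)
    assume "bad_separators S0 m x y \<noteq> {}"
    then obtain B'' f where B''S0: "B'' \<subseteq> S0" and F0: "good_focus S0 m x y B'' f"
      unfolding bad_separators_def by blast
    obtain a b c where w0: "bad_sep_witness S0 m x y B'' a b c" and ms0: "min_separator S0 m B'' c f"
      and H0: "c \<in> S0 - B''" "f \<in> S0 - B''" "(c, f) \<notin> (adjR m (S0 - B''))\<^sup>*"
      using focus_data[OF F0] by metis
    note W0 = wit_basic[OF w0]
    have irr0: "irred_simplex S0 m {a, b, c}" using W0(10) unfolding max_irred_simplex_def by blast
    have irr: "irred_simplex S m {a, b, c}" using irr0 S0S unfolding irred_simplex_def simplex_def by blast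
    have nomax: "\<not> (\<exists>A'. {a, b, c} \<subset> A' \<and> irred_simplex S m A')"
    proof
      assume "\<exists>A'. {a, b, c} \<subset> A' \<and> irred_simplex S m A'"
      then obtain A' where A': "{a, b, c} \<subset> A'" "irred_simplex S m A'" by blast
      have A'S: "A' \<subseteq> S" and smp: "\<forall>s\<in>A'. \<forall>t\<in>A'. m s t < \<infinity>"
        using A'(2) unfolding irred_simplex_def simplex_def by auto
      show False
      proof (cases "A' \<subseteq> S0")
        case True
        then have "irred_simplex S0 m A'" using A'(2) unfolding irred_simplex_def simplex_def by blast
        then show False using W0(10) A'(1) unfolding max_irred_simplex_def by blast
      next
        case False
        then obtain g where g: "g \<in> A'" "g \<notin> S0" by blast
        then have "g \<in> Foc" using A'S unfolding S0_def by blast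
        then obtain B where FB: "good_focus S m x y B g" unfolding Foc_def by blast
        obtain a1 b1 c1 where w1: "bad_sep_witness S m x y B a1 b1 c1" and
          H1: "c1 \<in> S - B" "g \<in> S - B" "(c1, g) \<notin> (adjR m (S - B))\<^sup>*"
          using focus_data[OF FB] by metis
        have "c1 \<in> {x, y}" using wit_c[OF cm w1 m5] .
        then have "c1 \<in> A'" using W0(8) A'(1) by blast
        then have "m c1 g < \<infinity>" using smp g by blast
        then have "(c1, g) \<in> (adjR m (S - B))\<^sup>*" using H1 by (meson adjI r_into_rtrancl)
        then show False using H1 by blast
      qed
    qed
    have perpsub: "perp S0 m {a, b, c} \<subseteq> perp S m {a, b, c}" using S0S unfolding perp_def by blast
    have w1: "B'' \<subseteq> S" using W0(1) S0S by blast
    have w2: "c \<in> S - B''" using W0(5,6) S0S by blast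
    have w3: "B'' \<subseteq> {a, b} \<union> perp S m {a, b, c}" using W0(9) perpsub by blast
    have w4: "max_irred_simplex S m {a, b, c}" unfolding max_irred_simplex_def using irr nomax by blast
    have w: "bad_sep_witness S m x y B'' a b c"
      unfolding bad_sep_witness_def
      using w1 w2 w3 w4 W0(2,3,4,8) by blast
    have cxy: "c \<in> {x, y}" using wit_c[OF cm w m5] .
    obtain z where z: "z \<in> {x, y}" "z \<notin> B''" using cxy H0 by blast
    have zS0: "z \<in> S0 - B''" using z xyS0 by blast
    have conn: "(b1, b2) \<in> (adjR m (S0 - B''))\<^sup>*"
      if B: "B \<in> ?BS" and b1: "b1 \<in> B - B''" and b2: "b2 \<in> B - B''" for B b1 b2
    proof -
      obtain a2 b2' c2 where wB: "bad_sep_witness S m x y B a2 b2' c2" using BSw[OF B] by blast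
      have b1S: "b1 \<in> S0 - B''" and b2S: "b2 \<in> S0 - B''" using BS_sub_S0[OF B] b1 b2 by blast+
      have m1: "m b1 z < \<infinity>" using wit_adj[OF cm wB _ z(1)] b1 by blast
      have "m b2 z < \<infinity>" using wit_adj[OF cm wB _ z(1)] b2 by blast
      moreover have "z \<in> S" "b2 \<in> S" using zS0 b2S S0S by blast+
      ultimately have m2: "m z b2 < \<infinity>" using cm_sym[OF cm, of z b2] by simp
      have r1: "(b1, z) \<in> (adjR m (S0 - B''))\<^sup>*" using b1S zS0 m1 by (meson adjI r_into_rtrancl)
      show ?thesis using reach_step[of b1 z m "S0 - B''" b2, OF r1] zS0 b2S m2 by blast
    qed
    have rr: "(w \<in> S0 \<longrightarrow> (c, w) \<in> (adjR m (S0 - B''))\<^sup>*) \<and>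
      (\<forall>B. good_focus S m x y B w \<longrightarrow> (\<exists>b\<in>B - B''. (c, b) \<in> (adjR m (S0 - B''))\<^sup>*))"
      if "(c, w) \<in> (adjR m (S - B''))\<^sup>*" for w
      using that
    proof (induction rule: rtrancl_induct)
      case base
      show ?case using H0 unfolding S0_def Foc_def by blast
    next
      case (step w w')
      have A: "w \<in> S - B''" "w' \<in> S - B''" "m w w' < \<infinity>" using adjD[OF step.hyps(2)] by auto
      have "w \<in> S" "w' \<in> S" using A by blast+
      then have "m w w' = m w' w" by (rule cm_sym[OF cm])
      then have mw'w: "m w' w < \<infinity>" using A(3) by simp
      show ?case
      proof (cases "w \<in> S0")
        case True
        then have r: "(c, w) \<in> (adjR m (S0 - B''))\<^sup>*" using step.IH by blast
        have wnF: "w \<notin> Foc" using True unfolding S0_def by blast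
        show ?thesis
        proof (intro conjI impI allI)
          assume "w' \<in> S0"
          then have "w' \<in> S0 - B''" using A by blast
          moreover have "w \<in> S0 - B''" using True A by blast
          ultimately show "(c, w') \<in> (adjR m (S0 - B''))\<^sup>*"
            using reach_step[OF r _ _ A(3)] by blast
        next
          fix B assume FB: "good_focus S m x y B w'"
          have "w \<in> B"
          proof (rule ccontr)
            assume "w \<notin> B"
            then have "good_focus S m x y B w" using focus_closed[OF cm FB _ _ mw'w] A by blast
            then show False using wnF unfolding Foc_def by blast
          qed
          then show "\<exists>b\<in>B - B''. (c, b) \<in> (adjR m (S0 - B''))\<^sup>*" using r A by blast
        qed
      next
        case False
        then have "w \<in> Foc" using A unfolding S0_def by blast
        then obtain B0 where F0': "good_focus S m x y B0 w" unfolding Foc_def by blast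
        obtain b where b: "b \<in> B0 - B''" "(c, b) \<in> (adjR m (S0 - B''))\<^sup>*" using step.IH F0' by blast
        have B0BS: "B0 \<in> ?BS" using FocBS[OF F0'] .
        show ?thesis
        proof (intro conjI impI allI)
          assume w'S0: "w' \<in> S0"
          have "w' \<in> B0"
          proof (rule ccontr)
            assume "w' \<notin> B0"
            then have "good_focus S m x y B0 w'" using focus_closed[OF cm F0' _ _ A(3)] A by blast
            then show False using w'S0 unfolding S0_def Foc_def by blast
          qed
          then have "(b, w') \<in> (adjR m (S0 - B''))\<^sup>*" using conn[OF B0BS b(1)] A by blast
          then show "(c, w') \<in> (adjR m (S0 - B''))\<^sup>*" using b(2) by (meson rtrancl_trans)
        next
          fix B assume FB: "good_focus S m x y B w'"
          obtain a3 b3 c3 where wB0: "bad_sep_witness S m x y B0 a3 b3 c3" using BSw[OF B0BS] by blast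
          have "w' \<notin> B0" using focus_not_in[OF cm m5 FB wB0] .
          then have "good_focus S m x y B0 w'" using focus_closed[OF cm F0' _ _ A(3)] A by blast
          then have "B = B0" by (rule focus_unique[OF cm m5 FB])
          then show "\<exists>b\<in>B - B''. (c, b) \<in> (adjR m (S0 - B''))\<^sup>*" using b by blast
        qed
      qed
    qed
    have sepS: "separator S m B'' c f"
      unfolding sep_iff
    proof (intro conjI)
      show "(c, f) \<notin> (adjR m (S - B''))\<^sup>*"
      proof
        assume "(c, f) \<in> (adjR m (S - B''))\<^sup>*"
        then have "f \<in> S0 \<longrightarrow> (c, f) \<in> (adjR m (S0 - B''))\<^sup>*" using rr by blast
        then have "(c, f) \<in> (adjR m (S0 - B''))\<^sup>*" using H0(2) by blast
        then show False using H0 by blast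
      qed
    qed (use B''S0 S0S H0 in auto)
    have minS: "\<not> (\<exists>B'. B' \<subset> B'' \<and> separator S m B' c f)"
    proof
      assume "\<exists>B'. B' \<subset> B'' \<and> separator S m B' c f"
      then obtain B' where B': "B' \<subset> B''" "separator S m B' c f" by blast
      then have nr: "(c, f) \<notin> (adjR m (S - B'))\<^sup>*" unfolding sep_iff by blast
      have "(c, f) \<notin> (adjR m (S0 - B'))\<^sup>*"
      proof
        assume "(c, f) \<in> (adjR m (S0 - B'))\<^sup>*"
        moreover have "S0 - B' \<subseteq> S - B'" using S0S by blast
        ultimately have "(c, f) \<in> (adjR m (S - B'))\<^sup>*" by (rule reach_mono)
        then show False using nr by blast
      qed
      then have "separator S0 m B' c f" unfolding sep_iff using B' B''S0 H0 by blast
      then show False using ms0 B'(1) unfolding min_separator_def by blast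
    qed
    have "good_focus S m x y B'' f" unfolding good_focus_def min_separator_def
      using w sepS minS H0 S0S by blast
    then have "f \<in> Foc" unfolding Foc_def by blast
    then show False using H0 unfolding S0_def by blast
  qed
  show ?thesis
  proof (rule ex1I[of _ S0])
    show "S0 \<subseteq> S \<and> reduced_visual_star_decomp S m ?BS ?SL S0 \<and> {x, y} \<subseteq> S0 \<and>
      bad_separators S0 m x y = {}" using S0S decomp xyS0 noBS by blast
  next
    fix T assume T: "T \<subseteq> S \<and> reduced_visual_star_decomp S m ?BS ?SL T \<and> {x, y} \<subseteq> T \<and>
      bad_separators T m x y = {}"
    have TS: "T \<subseteq> S" using T by blast
    have RT: "reduced_visual_star_decomp S m ?BS ?SL T" using T by blast
    have D: "S = T \<union> (\<Union>B\<in>?BS. ?SL B)"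
      using RT unfolding reduced_visual_star_decomp_def by (elim conjE)
    have D2: "\<forall>B\<in>?BS. T \<inter> ?SL B = B \<and> B \<subset> T \<and> B \<subset> ?SL B"
      using RT unfolding reduced_visual_star_decomp_def by (elim conjE)
    show "T = S0"
    proof
      show "T \<subseteq> S0"
      proof
        fix s assume s: "s \<in> T"
        show "s \<in> S0"
        proof (rule ccontr)
          assume "s \<notin> S0"
          then have "s \<in> Foc" using s TS unfolding S0_def by blast
          then obtain B where F: "good_focus S m x y B s" unfolding Foc_def by blast
          have "s \<in> ?SL B" using F unfolding good_foci_def by blast
          have "T \<inter> ?SL B = B \<and> B \<subset> T \<and> B \<subset> ?SL B" by (rule bspec[OF D2 FocBS[OF F]])
          then have eq: "T \<inter> ?SL B = B" by (elim conjE)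
          have "s \<in> T \<inter> ?SL B" using s \<open>s \<in> ?SL B\<close> by (rule IntI)
          then have "s \<in> B" using eq by simp
          then show False using FocS[OF F] by blast
        qed
      qed
    next
      show "S0 \<subseteq> T"
      proof
        fix s assume s: "s \<in> S0"
        then have sS: "s \<in> S" using S0S by blast
        have "s \<in> T \<union> (\<Union>B\<in>?BS. ?SL B)" using sS by (subst (asm) D)
        then have "s \<in> T \<or> (\<exists>B\<in>?BS. s \<in> ?SL B)" by blast
        then show "s \<in> T"
        proof
          assume "\<exists>B\<in>?BS. s \<in> ?SL B"
          then obtain B where B: "B \<in> ?BS" "s \<in> ?SL B" by blast
          have "s \<notin> good_foci S m x y B" using s unfolding S0_def Foc_def good_foci_def by blast
          then have "s \<in> B" using B by blast
          moreover have "B \<subset> T"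
            using bspec[OF D2 B(1)] by (elim conjE)
          ultimately show "s \<in> T" by blast
        qed
      qed
    qed
  qed
qed

end
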